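(* Let $M\in\mathrm{Mat}(2,\mathbb{Z})$ with $\mathrm{mgcd}(M)=\mu\neq0$, and let $C=\begin{pmatrix}0&-D\\1&T\end{pmatrix}$ with $D=\det(M)$, $T=\mathrm{trace}(M)$ be its companion matrix. Then for all integers $n\ge2$ with $\gcd(n,\mu)=1$, the reductions of $M$ and $C$ mod $n$ are $\mathrm{Mat}(2,\mathbb{Z}_n)^\times$-conjugate. In this case, $M$ and $C$ share the same local statistics on $L_n$.
   Context: For $M=\begin{pmatrix}a&b\\c&d\end{pmatrix}\in\mathrm{Mat}(2,\mathbb{Z})$, $\mathrm{mgcd}(M)=\gcd(b,c,d-a)\ge0$ (equal to $0$ iff $b=c=d-a=0$). $\mathbb{Z}_n=\mathbb{Z}/n\mathbb{Z}$ and $\mathrm{Mat}(2,\mathbb{Z}_n)^\times$ is the group of invertible $2\times2$ matrices over $\mathbb{Z}_n$. $L_n=\{(\frac{k}{n},\frac{\ell}{n}):0\le k,\ell<n\}\subset\mathbb{T}^2=\mathbb{R}^2/\mathbb{Z}^2$, on which an integer matrix acts by multiplication mod $1$. Two integer matrices have the same local statistics on $L_n$ if the directed pseudo-graphs on $L_n$ they induce (vertices the points of $L_n$, a directed edge from $x$ to $Mx$) are isomorphic as graphs. *)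

theory Defs
  imports "HOL-Analysis.Analysis" "HOL-Number_Theory.Cong"
begin

type_synonym imat2 = "int ^ 2 ^ 2"

definition mgcd :: "imat2 \<Rightarrow> int" where
  "mgcd M = gcd (M $ 1 $ 2) (gcd (M $ 2 $ 1) (M $ 2 $ 2 - M $ 1 $ 1))"

definition companion :: "imat2 \<Rightarrow> imat2" where
  "companion M = (\<chi> i j. if i = 1 then (if j = 1 then 0 else - det M)
                                     else (if j = 1 then 1 else trace M))"

definition mat_cong :: "int \<Rightarrow> imat2 \<Rightarrow> imat2 \<Rightarrow> bool" where
  "mat_cong n A B \<longleftrightarrow> (\<forall>i j. [A $ i $ j = B $ i $ j] (mod n))"

text \<open>Reductions mod n are conjugate by an element of Mat(2,Z_n)^x
  (P, Q integer representatives of an invertible matrix and its inverse).\<close>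
definition conj_mod :: "int \<Rightarrow> imat2 \<Rightarrow> imat2 \<Rightarrow> bool" where
  "conj_mod n A B \<longleftrightarrow> (\<exists>P Q :: imat2.
      mat_cong n (P ** Q) (mat 1) \<and> mat_cong n (Q ** P) (mat 1) \<and>
      mat_cong n (P ** A ** Q) B)"

text \<open>The lattice L_n, the point (k/n, l/n) of the torus identified with (k,l), 0 \<le> k,l < n.\<close>
definition Ln :: "int \<Rightarrow> (int \<times> int) set" where
  "Ln n = {0..<n} \<times> {0..<n}"

text \<open>Action of an integer matrix on L_n: multiplication mod 1 of (k/n, l/n)
  corresponds to multiplication mod n of (k,l).\<close>
definition act :: "int \<Rightarrow> imat2 \<Rightarrow> int \<times> int \<Rightarrow> int \<times> int" where
  "act n M x = ((M $ 1 $ 1 * fst x + M $ 1 $ 2 * snd x) mod n,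
                (M $ 2 $ 1 * fst x + M $ 2 $ 2 * snd x) mod n)"

definition edges :: "int \<Rightarrow> imat2 \<Rightarrow> ((int \<times> int) \<times> (int \<times> int)) set" where
  "edges n M = {(x, act n M x) | x. x \<in> Ln n}"

definition same_local_stats :: "int \<Rightarrow> imat2 \<Rightarrow> imat2 \<Rightarrow> bool" where
  "same_local_stats n A B \<longleftrightarrow> (\<exists>f. bij_betw f (Ln n) (Ln n) \<and>
      (\<forall>x\<in>Ln n. \<forall>y\<in>Ln n. (x, y) \<in> edges n A \<longleftrightarrow> (f x, f y) \<in> edges n B))"

end

theory Submission
  imports Defs
begin


definition qf :: "int \<Rightarrow> int \<Rightarrow> int \<Rightarrow> int \<Rightarrow> int \<Rightarrow> int" where
  "qf c e b x y = c*x^2 + e*x*y - b*y^2"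

lemma qf_prime:
  fixes p :: int
  assumes "prime p" "\<not> p dvd gcd b (gcd c e)"
  shows "\<exists>x y. \<not> p dvd qf c e b x y"
proof (cases "p dvd c")
  case False thus ?thesis by (rule_tac x=1 in exI, rule_tac x=0 in exI) (simp add: qf_def)
next
  case True
  show ?thesis
  proof (cases "p dvd b")
    case False thus ?thesis by (rule_tac x=0 in exI, rule_tac x=1 in exI) (simp add: qf_def)
  next
    case B: True
    with True assms have "\<not> p dvd e" by auto
    hence "\<not> p dvd c + e - b" using True B
      by (metis add_diff_cancel_left' diff_add_cancel dvd_add_right_iff dvd_diff)
    thus ?thesis by (rule_tac x=1 in exI, rule_tac x=1 in exI) (simp add: qf_def)
  qed
qed

lemma qf_cong:
  assumes "[x = x'] (mod m)" "[y = y'] (mod m)"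
  shows "[qf c e b x y = qf c e b x' y'] (mod m)"
  unfolding qf_def using assms
  by (intro cong_add cong_diff cong_mult cong_pow cong_refl) auto

lemma qf_exists_aux:
  fixes n :: int
  shows "0 < n \<Longrightarrow> coprime n (gcd b (gcd c e)) \<Longrightarrow> \<exists>x y. coprime (qf c e b x y) n"
proof (induction "nat n" arbitrary: n rule: less_induct)
  case less
  show ?case
  proof (cases "n = 1")
    case True thus ?thesis by auto
  next
    case False
    with less.prems have "\<not> is_unit n" by auto
    with less.prems obtain p where p: "p dvd n" "prime p"
      using prime_divisor_exists[of n] by auto
    then obtain n1 where n1: "n = p * n1" by (auto elim: dvdE)
    have p2: "p \<ge> 2" using p(2) prime_ge_2_int by blast
    have n1pos: "n1 > 0" using less.prems(1) n1 p2 by (simp add: zero_less_mult_iff)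
    have lt: "nat n1 < nat n" using n1 n1pos p2 by (simp add: nat_less_eq_zless)
    have cop1: "coprime n1 (gcd b (gcd c e))" using less.prems(2) n1 by simp
    obtain x0 y0 where h0: "coprime (qf c e b x0 y0) n1" using less.hyps[OF lt n1pos cop1] by blast
    show ?thesis
    proof (cases "p dvd n1")
      case True
      hence "coprime (qf c e b x0 y0) p" using h0 coprime_imp_coprime
        by (meson coprime_commute coprime_absorb_left dvd_trans coprime_common_divisor dvd_refl) 
      thus ?thesis using h0 n1 by auto
    next
      case False
      have "\<not> p dvd gcd b (gcd c e)"
        using less.prems(2) p by (metis coprime_common_divisor not_prime_unit)
      then obtain x1 y1 where h1: "\<not> p dvd qf c e b x1 y1" using qf_prime p(2) by blast
      have "coprime n1 p" using False p(2) prime_imp_coprime coprime_commute by blast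
      then obtain u where u: "[n1 * u = 1] (mod p)" using cong_solve_coprime_int by blast
      define x where "x = x0 + n1*u*(x1-x0)"
      define y where "y = y0 + n1*u*(y1-y0)"
      have "[x = x0] (mod n1)" unfolding x_def
        by (simp add: cong_iff_dvd_diff)
      moreover have "[y = y0] (mod n1)" unfolding y_def
        by (simp add: cong_iff_dvd_diff)
      ultimately have "[qf c e b x y = qf c e b x0 y0] (mod n1)" by (rule qf_cong)
      hence c1: "coprime (qf c e b x y) n1" using h0 cong_imp_coprime cong_sym by blast
      have "[x = x0 + 1*(x1-x0)] (mod p)" unfolding x_def
        using u by (intro cong_add cong_mult cong_refl) auto
      hence "[x = x1] (mod p)" by simp
      moreover have "[y = y0 + 1*(y1-y0)] (mod p)" unfolding y_def
        using u by (intro cong_add cong_mult cong_refl) auto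
      hence "[y = y1] (mod p)" by simp
      ultimately have "[qf c e b x y = qf c e b x1 y1] (mod p)" by (rule qf_cong)
      hence "\<not> p dvd qf c e b x y" using h1 cong_dvd_iff by blast
      hence "coprime (qf c e b x y) p" using p(2) prime_imp_coprime coprime_commute by blast
      thus ?thesis using c1 n1 by auto
    qed
  qed
qed

lemma mgcd_eq: "mgcd M = gcd (M$1$2) (gcd (M$2$1) (M$2$2 - M$1$1))" by (simp add: mgcd_def)

lemma mat_cong_scale:
  assumes "\<And>i j. A $ i $ j = k * B $ i $ j" "[k = 1] (mod n)"
  shows "mat_cong n A B"
  unfolding mat_cong_def
proof (intro allI)
  fix i j
  have "[k * B$i$j = 1 * B$i$j] (mod n)" using assms(2) by (intro cong_mult cong_refl)
  thus "[A $ i $ j = B $ i $ j] (mod n)" using assms(1) by simp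
qed

lemma conj_part:
  fixes M :: imat2 and n :: int
  assumes "n > 0" and "coprime n (mgcd M)"
  shows "conj_mod n M (companion M)"
proof -
  define a where "a = M$1$1"
  define b where "b = M$1$2"
  define c where "c = M$2$1"
  define d where "d = M$2$2"
  have cop: "coprime n (gcd b (gcd c (d - a)))" using assms(2) by (simp add: mgcd_def a_def b_def c_def d_def)
  obtain x y where xy: "coprime (qf c (d-a) b x y) n" using qf_exists_aux[OF assms(1) cop] by blast
  define \<delta> where "\<delta> = qf c (d-a) b x y"
  obtain u where u: "[\<delta> * u = 1] (mod n)" using xy cong_solve_coprime_int unfolding \<delta>_def by blast
  hence u': "[u * \<delta> = 1] (mod n)" by (simp add: mult.commute)
  define S :: imat2 where "S = (\<chi> i j. if i = 1 then (if j = 1 then x else a*x+b*y) else (if j = 1 then y else c*x+d*y))"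
  define P :: imat2 where "P = (\<chi> i j. u * (if i = 1 then (if j = 1 then c*x+d*y else -(a*x+b*y)) else (if j = 1 then -y else x)))"
  have Mx: "M = (\<chi> i j. if i = 1 then (if j = 1 then a else b) else (if j = 1 then c else d))"
    unfolding a_def b_def c_def d_def by (simp add: vec_eq_iff forall_2)
  have dt: "det M = a*d - b*c" by (simp add: det_2 a_def b_def c_def d_def)
  have tr: "trace M = a + d" by (simp add: trace_def sum_2 a_def d_def)
  have C: "companion M = (\<chi> i j. if i = 1 then (if j = 1 then 0 else -(a*d - b*c)) else (if j = 1 then 1 else a + d))"
    unfolding companion_def dt tr ..
  have e1: "(P ** S) $ i $ j = (u*\<delta>) * (mat 1 :: imat2) $ i $ j" for i j
  proof -
    have "i = 1 \<or> i = 2" "j = 1 \<or> j = 2" by (rule exhaust_2)+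
    thus ?thesis unfolding P_def S_def \<delta>_def qf_def
      by (auto simp add: matrix_matrix_mult_def sum_2 mat_def algebra_simps power2_eq_square)
  qed
  have e2: "(S ** P) $ i $ j = (u*\<delta>) * (mat 1 :: imat2) $ i $ j" for i j
  proof -
    have "i = 1 \<or> i = 2" "j = 1 \<or> j = 2" by (rule exhaust_2)+
    thus ?thesis unfolding P_def S_def \<delta>_def qf_def
      by (auto simp add: matrix_matrix_mult_def sum_2 mat_def algebra_simps power2_eq_square)
  qed
  have e3: "(P ** M ** S) $ i $ j = (u*\<delta>) * companion M $ i $ j" for i j
  proof -
    have "i = 1 \<or> i = 2" "j = 1 \<or> j = 2" by (rule exhaust_2)+
    thus ?thesis unfolding P_def S_def \<delta>_def qf_def C
      by (subst Mx, auto simp add: matrix_matrix_mult_def sum_2 mat_def algebra_simps power2_eq_square)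
  qed
  show ?thesis unfolding conj_mod_def
    by (rule exI[of _ P], rule exI[of _ S]) (intro conjI mat_cong_scale[OF _ u'] e1 e2 e3)
qed


definition lin :: "imat2 \<Rightarrow> int \<times> int \<Rightarrow> int \<times> int" where
  "lin A v = (A$1$1 * fst v + A$1$2 * snd v, A$2$1 * fst v + A$2$2 * snd v)"

definition vc :: "int \<Rightarrow> int \<times> int \<Rightarrow> int \<times> int \<Rightarrow> bool" where
  "vc n v w \<longleftrightarrow> [fst v = fst w] (mod n) \<and> [snd v = snd w] (mod n)"

lemma vc_sym: "vc n v w \<Longrightarrow> vc n w v" by (auto simp: vc_def cong_sym)
lemma vc_trans: "vc n u v \<Longrightarrow> vc n v w \<Longrightarrow> vc n u w" by (auto simp: vc_def intro: cong_trans)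
lemma vc_act: "vc n (act n A v) (lin A v)" by (simp add: vc_def act_def lin_def cong_def)
lemma vc_lin: "vc n v w \<Longrightarrow> vc n (lin A v) (lin A w)"
  by (auto simp: vc_def lin_def intro!: cong_add cong_mult cong_refl)
lemma vc_mat: "mat_cong n A B \<Longrightarrow> vc n (lin A v) (lin B v)"
  by (auto simp: vc_def lin_def mat_cong_def intro!: cong_add cong_mult cong_refl)
lemma lin_mult: "lin (A ** B) v = lin A (lin B v)"
  by (simp add: lin_def matrix_matrix_mult_def sum_2 algebra_simps)
lemma lin_one: "lin (mat 1) v = v"
  by (simp add: lin_def mat_def)
lemma vc_Ln: "v \<in> Ln n \<Longrightarrow> w \<in> Ln n \<Longrightarrow> vc n v w \<Longrightarrow> v = w"
  by (cases v; cases w) (auto simp: Ln_def vc_def cong_def)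
lemma act_Ln: "n > 0 \<Longrightarrow> act n A v \<in> Ln n"
  by (simp add: Ln_def act_def)
lemma vc_inv: "mat_cong n (Q ** P) (mat 1) \<Longrightarrow> vc n (lin Q (lin P v)) v"
  using vc_mat[of n "Q ** P" "mat 1" v] by (simp add: lin_mult lin_one)
lemma vc_refl: "vc n v v" by (simp add: vc_def)

lemma stats_part:
  assumes "n > 0" "conj_mod n A B"
  shows "same_local_stats n A B"
proof -
  obtain P Q where PQ: "mat_cong n (P ** Q) (mat 1)" and QP: "mat_cong n (Q ** P) (mat 1)"
    and PAQ: "mat_cong n (P ** A ** Q) B" using assms(2) unfolding conj_mod_def by blast
  define f where "f = act n P"
  have inj: "inj_on f (Ln n)"
  proof (rule inj_onI)
    fix v w assume v: "v \<in> Ln n" and w: "w \<in> Ln n" and eq: "f v = f w"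
    have "vc n (lin P v) (lin P w)"
      using vc_act[of n P v] vc_act[of n P w] eq unfolding f_def
      by (metis vc_sym vc_trans)
    hence "vc n (lin Q (lin P v)) (lin Q (lin P w))" by (rule vc_lin)
    hence "vc n v w" using vc_inv[OF QP, of v] vc_inv[OF QP, of w] by (metis vc_sym vc_trans)
    thus "v = w" using v w vc_Ln by blast
  qed
  have sub: "f ` Ln n \<subseteq> Ln n" using act_Ln[OF assms(1)] unfolding f_def by blast
  have fin: "finite (Ln n)" by (simp add: Ln_def)
  have bij: "bij_betw f (Ln n) (Ln n)"
    unfolding bij_betw_def using inj endo_inj_surj[OF fin sub inj] by blast
  have key: "vc n (act n B (f x)) (lin P (lin A x))" for x
  proof -
    have 1: "vc n (act n B (f x)) (lin B (lin P x))"
      unfolding f_def using vc_act vc_lin vc_trans by blast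
    have 2: "vc n (lin B (lin P x)) (lin P (lin A (lin Q (lin P x))))"
      using vc_mat[OF PAQ, of "lin P x"] by (simp add: lin_mult vc_sym)
    have 3: "vc n (lin P (lin A (lin Q (lin P x)))) (lin P (lin A x))"
      by (intro vc_lin vc_inv[OF QP])
    show ?thesis using 1 2 3 vc_trans by blast
  qed
  have edge: "(x, y) \<in> edges n A \<longleftrightarrow> (f x, f y) \<in> edges n B" if x: "x \<in> Ln n" and y: "y \<in> Ln n" for x y
  proof
    assume "(x, y) \<in> edges n A"
    hence yx: "y = act n A x" by (auto simp: edges_def)
    have "vc n (f y) (lin P y)" unfolding f_def by (rule vc_act)
    moreover have "vc n (lin P y) (lin P (lin A x))" unfolding yx by (intro vc_lin vc_act)
    ultimately have "vc n (f y) (act n B (f x))" using key vc_sym vc_trans by blast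
    hence "f y = act n B (f x)" using vc_Ln act_Ln[OF assms(1)] unfolding f_def by blast
    moreover have "f x \<in> Ln n" using sub x by blast
    ultimately show "(f x, f y) \<in> edges n B" unfolding edges_def by blast
  next
    assume "(f x, f y) \<in> edges n B"
    hence fy: "f y = act n B (f x)" by (auto simp: edges_def)
    have "vc n (lin P y) (lin P (lin A x))"
      using vc_act[of n P y] key[of x] fy unfolding f_def by (metis vc_sym vc_trans)
    hence "vc n (lin Q (lin P y)) (lin Q (lin P (lin A x)))" by (rule vc_lin)
    hence "vc n y (lin A x)" using vc_inv[OF QP, of y] vc_inv[OF QP, of "lin A x"]
      by (metis vc_sym vc_trans)
    hence "vc n y (act n A x)" using vc_act vc_sym vc_trans by blast
    hence "y = act n A x" using vc_Ln y act_Ln[OF assms(1)] by blast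
    thus "(x, y) \<in> edges n A" using x unfolding edges_def by blast
  qed
  show ?thesis unfolding same_local_stats_def using bij edge by blast
qed

theorem proposition33:
  fixes M :: imat2 and n :: int
  assumes "mgcd M \<noteq> 0"
    and "n \<ge> 2"
    and "coprime n (mgcd M)"
  shows "conj_mod n M (companion M) \<and> same_local_stats n M (companion M)"
proof -
  have n: "n > 0" using assms(2) by simp
  have "conj_mod n M (companion M)" using conj_part[OF n assms(3)] .
  thus ?thesis using stats_part[OF n] by blast
qed

end
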